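(* Let $g>0$ and $n\ge 2$ be an integer, and put $N=n!$. For $x\in(0,1]$ let $\alpha_0(x)\in(0,\pi]$ be defined by $$\cos\Big(\frac{\alpha_0(x)}{2}\Big)=\frac{1-x}{\sqrt{1-2x+2x^2}},$$ and let $T(x)=\frac{2}{g}\ln\Big(\cot\frac{\alpha_0(x)}{4}\Big)$. Then for every integer $s$ with $1\le s\le N$, $$\sum_{i=0}^{\lfloor \log_2 s\rfloor} T\Big(\frac{\lfloor s/2^i\rfloor}{N}\Big)\;\le\;\frac{2}{g}\,\log(2s)\,\Big(\log_2\frac{N}{\sqrt{s}}+1\Big).$$
   Context: $\ln$ and $\log$ denote the natural logarithm and $\log_2$ the base-2 logarithm. $T(x)$ is the nonlinear (Gross–Pitaevskii) evolution time needed to make the single-qubit states $\frac{(N-t)|0\rangle+t|1\rangle}{\sqrt{N^2-2Nt+2t^2}}$ with $t=0$ and $t=xN$ orthogonal. *)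

theory Defs
  imports "HOL-Analysis.Analysis"
begin

definition alpha0 :: "real \<Rightarrow> real" where
  "alpha0 x = 2 * arccos ((1 - x) / sqrt (1 - 2*x + 2*x^2))"

definition Tevo :: "real \<Rightarrow> real \<Rightarrow> real" where
  "Tevo g x = (2 / g) * ln (cot (alpha0 x / 4))"

end

theory Submission
  imports Defs
begin

lemma T_bound:
  fixes g x :: real
  assumes g: "g > 0" and x0: "0 < x" and x1: "x \<le> 1"
  shows "Tevo g x \<le> (2/g) * ln (2/x)"
proof -
  define r where "r = sqrt (1 - 2*x + 2*x^2)"
  have eqq: "1 - 2*x + 2*x^2 = (1-x)^2 + x^2" by (simp add: power2_eq_square algebra_simps)
  have "(1-x)^2 + x^2 \<ge> 0" by simp
  hence rr: "r^2 = (1-x)^2 + x^2" unfolding r_def eqq by (simp only: real_sqrt_pow2)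
  have "(1-x)^2 + x^2 > 0" using x0 by (simp add: add_nonneg_pos)
  hence rpos: "r > 0" unfolding r_def eqq by simp
  have "(1-x)^2 < r^2" using rr x0 by simp
  hence rge: "r > 1 - x" using rpos by (meson power_less_imp_less_base less_imp_le)
  have "x * (x - 1) \<le> 0" using x0 x1 by (simp add: mult_nonneg_nonpos)
  hence "r^2 \<le> 1^2" using rr by (simp add: power2_eq_square algebra_simps)
  hence rle: "r \<le> 1" by (rule power2_le_imp_le) simp
  define c where "c = (1-x)/r"
  have c0: "0 \<le> c" unfolding c_def using rpos x1 by simp
  have c1: "c < 1" unfolding c_def using rpos rge by simp
  define th where "th = arccos c"
  have costh: "cos th = c" unfolding th_def using c0 c1 by simp
  have "c^2 = (1-x)^2/r^2" unfolding c_def by (simp only: power_divide)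
  hence "1 - c^2 = (r^2 - (1-x)^2)/r^2" using rpos
    by (simp add: diff_divide_distrib)
  also have "\<dots> = (x/r)^2" using rr by (simp add: power_divide)
  finally have cc: "1 - c^2 = (x/r)^2" .
  have sinth: "sin th = x/r" unfolding th_def using c0 c1 rpos x0 cc by (simp add: sin_arccos)
  define h where "h = th/2"
  have ha: "alpha0 x / 4 = h" unfolding h_def th_def c_def alpha0_def r_def by simp
  have th_range: "0 < th" "th \<le> pi/2" unfolding th_def using c0 c1 arccos_lt_bounded[of c] arccos_le_pi2[of c] by auto
  have sh: "sin h > 0" unfolding h_def using th_range by (intro sin_gt_zero) auto
  have ch: "cos h > 0" unfolding h_def using th_range by (intro cos_gt_zero) auto
  have s2: "sin th = 2 * sin h * cos h" unfolding h_def using sin_double[of "th/2"] by simp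
  have c2: "cos th = 2 * (cos h)^2 - 1" unfolding h_def using cos_double_cos[of "th/2"] by simp
  have "cot h = (2 * (cos h)^2) / (2 * sin h * cos h)" unfolding cot_def using ch
    by (simp add: power2_eq_square)
  also have "\<dots> = (1 + c) / (x/r)" using s2 c2 costh sinth by simp
  also have "\<dots> = (r + 1 - x)/x" unfolding c_def using rpos x0 by (simp add: field_simps)
  finally have cot_eq: "cot h = (r + 1 - x)/x" .
  have cpos: "cot h > 0" using sh ch unfolding cot_def by simp
  have "cot h \<le> 2/x" using cot_eq rle x0 x1 by (simp add: divide_right_mono)
  hence "ln (cot h) \<le> ln (2/x)" using cpos by (rule ln_mono)
  thus ?thesis unfolding Tevo_def ha using g by (intro mult_left_mono) auto
qed


lemma aux1: fixes a k t B :: real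
  assumes "a > 0" "k \<le> t" "a*(t+1) \<le> B"
  shows "0 \<le> B - a * (t + k + 1) / 2"
proof -
  have "a * k \<le> a * t" using assms by (intro mult_left_mono) auto
  moreover have "a * (t + k + 1) = a*t + a*k + a" by (simp add: algebra_simps)
  moreover have "a * (t+1) = a*t + a" by (simp add: algebra_simps)
  ultimately have "a * (t + k + 1) \<le> 2 * B" using assms(1,3) by argo
  thus ?thesis by simp
qed
lemma aux: fixes a k t B :: real
  assumes "a > 0" "k \<le> t" "a*(t+1) \<le> B"
  shows "(k+1)*B - a*(k*(k+1)/2) \<le> (t+1)*B - a*(t*(t+1)/2)"
proof -
  have "(t - k) * (B - a * (t + k + 1) / 2) \<ge> 0"
    using aux1[OF assms] assms(2) by simp
  moreover have "(t+1)*B - a*(t*(t+1)/2) - ((k+1)*B - a*(k*(k+1)/2)) = (t - k) * (B - a * (t + k + 1) / 2)"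
    by (simp add: algebra_simps diff_divide_distrib add_divide_distrib)
  ultimately show ?thesis by argo
qed
lemma sum_rev_nat: "(\<Sum>i = 0..(k::nat). real (k - i)) = real k * (real k + 1) / 2"
proof (induction k)
  case 0 then show ?case by simp
next
  case (Suc k)
  have "(\<Sum>i = 0..Suc k. real (Suc k - i)) = (\<Sum>i = 0..k. real (Suc k - i))"
    by (simp add: sum.atLeast0_atMost_Suc)
  also have "\<dots> = (\<Sum>i = 0..k. real (k - i) + 1)"
    by (intro sum.cong) (auto simp: Suc_diff_le)
  also have "\<dots> = real k * (real k + 1) / 2 + (real k + 1)"
    using Suc by (simp add: sum.distrib)
  finally show ?case by (simp add: field_simps)
qed

theorem lemma1:
  fixes g :: real and n s :: nat
  assumes "g > 0" and "n \<ge> 2" and "1 \<le> s" and "s \<le> fact n"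
  shows "(\<Sum>i = 0..nat \<lfloor>log 2 (real s)\<rfloor>.
            Tevo g (real (s div 2 ^ i) / real (fact n :: nat)))
         \<le> (2 / g) * ln (2 * real s) * (log 2 (real (fact n :: nat) / sqrt (real s)) + 1)"
proof -
  define N where "N = (fact n :: nat)"
  define k where "k = nat \<lfloor>log 2 (real s)\<rfloor>"
  define t where "t = log 2 (real s)"
  have sN: "s \<le> N" using assms N_def by simp
  have spos: "real s > 0" using assms by simp
  have t0: "t \<ge> 0" unfolding t_def using assms by simp
  have kt: "real k \<le> t" unfolding k_def t_def using t0 t_def by linarith
  have pk: "2^k \<le> s"
  proof -
    have "real (2^k) = 2 powr real k" by (simp add: powr_realpow)
    also have "\<dots> \<le> 2 powr t" using kt by simp
    also have "\<dots> = real s" unfolding t_def using spos by simp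
    finally show ?thesis by linarith
  qed
  have mi: "2^(k-i) \<le> s div 2^i" if "i \<le> k" for i
  proof -
    have "2^(k-i) * 2^i = (2::nat)^k" using that by (simp add: power_add[symmetric])
    thus ?thesis using pk by (simp add: less_eq_div_iff_mult_less_eq)
  qed
  have Npos: "real N > 0" unfolding N_def by simp
  have termb: "Tevo g (real (s div 2 ^ i) / real N) \<le> (2/g) * (ln (2 * real N) - real (k-i) * ln 2)"
    if "i \<in> {0..k}" for i
  proof -
    have ik: "i \<le> k" using that by simp
    have m1: "real (2^(k-i)) \<le> real (s div 2^i)" using mi[OF ik] by linarith
    have "(1::nat) \<le> 2^(k-i)" by simp
    hence "1 \<le> s div 2^i" using mi[OF ik] by (rule order_trans)
    hence mpos: "real (s div 2^i) > 0" by simp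
    have "s div 2^i \<le> N" using div_le_dividend[of s "2^i"] sN by (rule order_trans)
    hence mN: "real (s div 2^i) \<le> real N" by (rule of_nat_mono)
    have p1: "0 < real (s div 2 ^ i) / real N" using mpos Npos by simp
    have p2: "real (s div 2 ^ i) / real N \<le> 1" using mpos Npos mN by simp
    have h1: "Tevo g (real (s div 2 ^ i) / real N) \<le> (2/g) * ln (2 / (real (s div 2 ^ i) / real N))"
      by (rule T_bound[OF assms(1) p1 p2])
    have e: "2 / (real (s div 2 ^ i) / real N) = 2 * real N / real (s div 2 ^ i)" by simp
    have "2 * real N / real (s div 2 ^ i) \<le> 2 * real N / 2^(k-i)"
      using m1 Npos mpos by (intro divide_left_mono) auto
    hence h2: "ln (2 / (real (s div 2 ^ i) / real N)) \<le> ln (2 * real N / 2^(k-i))"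
      unfolding e using mpos Npos by (intro ln_mono) auto
    have h3: "ln (2 * real N / 2^(k-i)) = ln (2 * real N) - real (k-i) * ln 2"
      using Npos by (simp add: ln_div ln_realpow)
    have "(2/g) * ln (2 / (real (s div 2 ^ i) / real N)) \<le> (2/g) * (ln (2 * real N) - real (k-i) * ln 2)"
      using h2 h3 assms(1) by (intro mult_left_mono) auto
    with h1 show ?thesis by (rule order_trans)
  qed
  have "(\<Sum>i = 0..k. Tevo g (real (s div 2 ^ i) / real N))
        \<le> (\<Sum>i = 0..k. (2/g) * (ln (2 * real N) - real (k-i) * ln 2))"
    by (rule sum_mono) (rule termb)
  also have "\<dots> = (2/g) * (\<Sum>i = 0..k. (ln (2 * real N) - real (k-i) * ln 2))"
    by (simp add: sum_distrib_left)
  also have "\<dots> = (2/g) * ((real k + 1) * ln (2 * real N) - ln 2 * (real k * (real k + 1) / 2))"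
    unfolding sum_subtractf sum_distrib_right[symmetric] sum_rev_nat by (simp add: algebra_simps)
  also have "\<dots> \<le> (2/g) * ((t+1) * ln (2 * real N) - ln 2 * (t * (t+1) / 2))"
  proof -
    define A where "A = ln (2 * real N)"
    define a where "a = ln (2::real)"
    have a0: "a > 0" unfolding a_def by simp
    have lns: "ln (real s) = a * t" unfolding a_def t_def using spos by (simp add: log_def)
    have "ln (2 * real s) \<le> A" unfolding A_def using sN spos by simp
    hence AA: "A \<ge> a * (t+1)" using lns spos by (simp add: ln_mult a_def algebra_simps)
    have "(real k + 1) * A - a * (real k * (real k + 1) / 2) \<le> (t+1) * A - a * (t * (t+1) / 2)"
      by (rule aux[OF a0 kt AA])
    thus ?thesis using assms(1) unfolding A_def a_def by (intro mult_left_mono) auto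
  qed
  also have "\<dots> = (2 / g) * ln (2 * real s) * (log 2 (real N / sqrt (real s)) + 1)"
  proof -
    have E1: "ln (2 * real s) = ln 2 * (t + 1)" using spos unfolding t_def by (simp add: ln_mult log_def algebra_simps)
    have E2: "log 2 (real N / sqrt (real s)) + 1 = ln (2 * real N) / ln 2 - t/2"
    proof -
      have L1: "ln (real N / sqrt (real s)) = ln (real N) - ln (real s) / 2"
        using spos Npos by (simp add: ln_div ln_sqrt)
      have L2: "ln (2 * real N) = ln 2 + ln (real N)" using Npos by (simp add: ln_mult)
      show ?thesis unfolding t_def log_def L1 L2 by (simp add: field_simps)
    qed
    have l2: "ln (2::real) > 0" by simp
    show ?thesis unfolding E1 E2 using l2 assms(1) by (simp add: field_simps)
  qed
  finally show ?thesis unfolding N_def k_def .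
qed

end
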